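(* For every $\alpha\in[m,M]$, with $E_\alpha=\{x\in[s^{-1},1):\lambda(x)\le\alpha\}$, the function $x\mapsto \mathds{1}_{E_\alpha}(x)/x$ is Riemann integrable on $[s^{-1},1]$.
   Context: Fix integers $p\ge 3$ and $2\le s<p$, and a set $A\subset\{0,1,\dots,p-1\}$ with $\#A=s$. Let $h:\{0,1,\dots,s-1\}\to A$ be the unique strictly increasing bijection. For a positive integer $n$ with base-$s$ expansion $n=\sum_{i=0}^k\varepsilon_i s^i$ ($\varepsilon_i\in\{0,\dots,s-1\}$, $\varepsilon_k\ne 0$), put $a_n=\sum_{i=0}^k h(\varepsilon_i)p^i$, and put $a_0=h(0)$. Let $b_n=a_n/n^{\log_s p}$ for $n\ge1$, $m=\inf_{n\ge1}b_n$, $M=\sup_{n\ge1}b_n$. For real $x\ge0$ let $a(x)=a_{\lfloor x\rfloor}$, and for $x>0$ let $\lambda(x)=\lim_{k\to\infty}\frac{a(s^kx)}{(s^kx)^{\log_s p}}$ (this limit exists). $\mathds{1}_E$ denotes the indicator function of $E$ (extended by $0$ at $x=1$). *)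

theory Defs
  imports "HOL-Analysis.Analysis"
begin

definition hmap :: "nat set \<Rightarrow> nat \<Rightarrow> nat" where
  "hmap A i = sorted_list_of_set A ! i"

text \<open>a_n: replace the base-s digits of n by their h-images and read in base p.
  For n \<ge> 1 the digit positions are exactly {i. s^i \<le> n} = {0..k}; a_0 = h(0).\<close>
definition aseq :: "nat \<Rightarrow> nat \<Rightarrow> nat set \<Rightarrow> nat \<Rightarrow> nat" where
  "aseq p s A n = (if n = 0 then hmap A 0
     else (\<Sum>i\<in>{i. s ^ i \<le> n}. hmap A ((n div s ^ i) mod s) * p ^ i))"

definition bseq :: "nat \<Rightarrow> nat \<Rightarrow> nat set \<Rightarrow> nat \<Rightarrow> real" where
  "bseq p s A n = real (aseq p s A n) / (real n) powr (log (real s) (real p))"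

definition mInf :: "nat \<Rightarrow> nat \<Rightarrow> nat set \<Rightarrow> real" where
  "mInf p s A = (INF n\<in>{1..}. bseq p s A n)"

definition MSup :: "nat \<Rightarrow> nat \<Rightarrow> nat set \<Rightarrow> real" where
  "MSup p s A = (SUP n\<in>{1..}. bseq p s A n)"

definition areal :: "nat \<Rightarrow> nat \<Rightarrow> nat set \<Rightarrow> real \<Rightarrow> nat" where
  "areal p s A x = aseq p s A (nat \<lfloor>x\<rfloor>)"

definition lam :: "nat \<Rightarrow> nat \<Rightarrow> nat set \<Rightarrow> real \<Rightarrow> real" where
  "lam p s A x = lim (\<lambda>k. real (areal p s A (real s ^ k * x))
                        / (real s ^ k * x) powr (log (real s) (real p)))"

definition Eset :: "nat \<Rightarrow> nat \<Rightarrow> nat set \<Rightarrow> real \<Rightarrow> real set" where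
  "Eset p s A \<alpha> = {x \<in> {1 / real s..<1}. lam p s A x \<le> \<alpha>}"

definition riemann_integrable :: "(real \<Rightarrow> real) \<Rightarrow> real \<Rightarrow> real \<Rightarrow> bool" where
  "riemann_integrable f a b \<longleftrightarrow>
     (\<exists>I. \<forall>\<epsilon>>0. \<exists>\<delta>>0. \<forall>(n::nat) (x::nat \<Rightarrow> real) (t::nat \<Rightarrow> real).
        (0 < n \<and> x 0 = a \<and> x n = b \<and>
         (\<forall>i<n. x i < x (Suc i) \<and> x (Suc i) - x i < \<delta> \<and> x i \<le> t i \<and> t i \<le> x (Suc i)))
        \<longrightarrow> \<bar>(\<Sum>i<n. f (t i) * (x (Suc i) - x i)) - I\<bar> < \<epsilon>)"

end

theory Submission
  imports Defs
begin


lemma hmap_in: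
  assumes "finite A" "d < card A" shows "hmap A d \<in> A"
  using assms unfolding hmap_def
  by (metis length_sorted_list_of_set nth_mem set_sorted_list_of_set)

lemma hmap_pos:
  assumes "finite A" "d < card A" "1 \<le> d" shows "1 \<le> hmap A d"
proof -
  have "sorted_wrt (<) (sorted_list_of_set A)" by simp
  hence "sorted_list_of_set A ! 0 < sorted_list_of_set A ! d"
    using sorted_wrt_nth_less[of "(<)" "sorted_list_of_set A" 0 d] assms by simp
  thus ?thesis unfolding hmap_def by simp
qed

lemma aseq_small:
  assumes "1 \<le> N" "N < s" shows "aseq p s A N = hmap A N"
proof -
  have "{i. s ^ i \<le> N} = {0}"
  proof (rule set_eqI, rule iffI)
    fix i assume "i \<in> {i. s ^ i \<le> N}"
    hence i: "s ^ i \<le> N" by simp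
    show "i \<in> {0}"
    proof (rule ccontr)
      assume "i \<notin> {0}"
      hence "s \<le> s ^ i" using assms by (simp add: self_le_power)
      thus False using i assms by simp
    qed
  next
    fix i assume "i \<in> {0::nat}" thus "i \<in> {i. s ^ i \<le> N}" using assms by simp
  qed
  thus ?thesis using assms unfolding aseq_def by simp
qed

lemma finite_digits:
  assumes "2 \<le> s" shows "finite {i. s ^ i \<le> (N::nat)}"
proof -
  have "{i. s ^ i \<le> N} \<subseteq> {..N}"
  proof
    fix i assume "i \<in> {i. s ^ i \<le> N}"
    hence "s ^ i \<le> N" by simp
    moreover have "i < 2 ^ i" by (rule less_exp)
    moreover have "2 ^ i \<le> s ^ i" using assms by (simp add: power_mono)
    ultimately show "i \<in> {..N}" by (meson le_trans less_imp_le atMost_iff)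
  qed
  thus ?thesis using finite_subset by blast
qed

lemma aseq_rec:
  assumes "2 \<le> s" "s \<le> N"
  shows "aseq p s A N = p * aseq p s A (N div s) + hmap A (N mod s)"
proof -
  have N1: "N div s \<ge> 1" using assms by (simp add: less_eq_div_iff_mult_less_eq)
  have eq: "{i. s ^ i \<le> N} = insert 0 (Suc ` {i. s ^ i \<le> N div s})"
  proof (rule set_eqI, rule iffI)
    fix i assume "i \<in> {i. s ^ i \<le> N}"
    hence i: "s ^ i \<le> N" by simp
    show "i \<in> insert 0 (Suc ` {i. s ^ i \<le> N div s})"
    proof (cases i)
      case (Suc j)
      hence "s ^ j * s \<le> N" using i by (simp add: mult.commute)
      hence "s ^ j \<le> N div s" using assms by (simp add: less_eq_div_iff_mult_less_eq)
      thus ?thesis using Suc by auto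
    qed simp
  next
    fix i assume "i \<in> insert 0 (Suc ` {i. s ^ i \<le> N div s})"
    then consider "i = 0" | j where "i = Suc j" "s ^ j \<le> N div s" by auto
    thus "i \<in> {i. s ^ i \<le> N}"
    proof cases
      case 1 thus ?thesis using assms by simp
    next
      case 2
      hence "s ^ j * s \<le> N" using assms by (simp add: less_eq_div_iff_mult_less_eq)
      thus ?thesis using 2 by (simp add: mult.commute)
    qed
  qed
  have fin: "finite {i. s ^ i \<le> N div s}" using finite_digits assms by blast
  have "aseq p s A N = (\<Sum>i\<in>insert 0 (Suc ` {i. s ^ i \<le> N div s}). hmap A ((N div s ^ i) mod s) * p ^ i)"
    using assms unfolding aseq_def eq by simp
  also have "\<dots> = hmap A (N mod s) + (\<Sum>i\<in>Suc ` {i. s ^ i \<le> N div s}. hmap A ((N div s ^ i) mod s) * p ^ i)"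
    using fin by (subst sum.insert) auto
  also have "(\<Sum>i\<in>Suc ` {i. s ^ i \<le> N div s}. hmap A ((N div s ^ i) mod s) * p ^ i)
      = (\<Sum>i\<in>{i. s ^ i \<le> N div s}. hmap A ((N div s ^ Suc i) mod s) * p ^ Suc i)"
    by (subst sum.reindex) auto
  also have "\<dots> = p * (\<Sum>i\<in>{i. s ^ i \<le> N div s}. hmap A ((N div s div s ^ i) mod s) * p ^ i)"
    by (simp add: sum_distrib_left div_mult2_eq mult_ac)
  also have "(\<Sum>i\<in>{i. s ^ i \<le> N div s}. hmap A ((N div s div s ^ i) mod s) * p ^ i) = aseq p s A (N div s)"
    using N1 unfolding aseq_def by simp
  finally show ?thesis by simp
qed


locale dig =
  fixes p s :: nat and A :: "nat set"
  assumes s2: "2 \<le> s" and sp: "s < p" and Asub: "A \<subseteq> {0..<p}" and cardA: "card A = s"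
begin

lemma finA: "finite A"
  using cardA s2 card.infinite by fastforce

lemma h_lt: "d < s \<Longrightarrow> hmap A d < p"
  using hmap_in[OF finA, of d] cardA Asub by auto

lemma h_pos: "1 \<le> d \<Longrightarrow> d < s \<Longrightarrow> 1 \<le> hmap A d"
  using hmap_pos[OF finA, of d] cardA by auto

lemma split:
  assumes "1 \<le> n" "N div s ^ r = n"
  shows "p ^ r * aseq p s A n \<le> aseq p s A N \<and> aseq p s A N + 1 \<le> p ^ r * (aseq p s A n + 1)"
  using assms(2)
proof (induction r arbitrary: N)
  case 0 thus ?case by simp
next
  case (Suc r)
  have e: "N div s div s ^ r = n" using Suc.prems by (simp add: div_mult2_eq)
  note IH = Suc.IH[OF e]
  have "N div s \<noteq> 0" using e assms(1) by (metis div_0 not_one_le_zero)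
  hence Ns: "s \<le> N" using s2 by (metis div_less not_le)
  have rec: "aseq p s A N = p * aseq p s A (N div s) + hmap A (N mod s)"
    by (rule aseq_rec[OF s2 Ns])
  have hl: "hmap A (N mod s) < p" using h_lt s2 by simp
  let ?a = "aseq p s A (N div s)"
  have "p ^ Suc r * aseq p s A n = p * (p ^ r * aseq p s A n)" by simp
  also have "\<dots> \<le> p * ?a" using IH by simp
  also have "\<dots> \<le> aseq p s A N" using rec by simp
  finally have 1: "p ^ Suc r * aseq p s A n \<le> aseq p s A N" .
  have "aseq p s A N + 1 \<le> p * ?a + p" using rec hl by simp
  also have "\<dots> = p * (?a + 1)" by (simp add: algebra_simps)
  also have "\<dots> \<le> p * (p ^ r * (aseq p s A n + 1))" using IH by (intro mult_le_mono2) simp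
  also have "\<dots> = p ^ Suc r * (aseq p s A n + 1)" by (simp only: power_Suc mult.assoc)
  finally show ?case using 1 by simp
qed

lemma a_bounds:
  assumes "s ^ r \<le> n" "n < s ^ Suc r"
  shows "p ^ r \<le> aseq p s A n \<and> aseq p s A n + 1 \<le> p ^ Suc r"
proof -
  define d where "d = n div s ^ r"
  have spos: "0 < s ^ r" using s2 by simp
  have d1: "1 \<le> d" unfolding d_def using assms(1) spos
    by (simp add: less_eq_div_iff_mult_less_eq)
  have ds: "d < s" unfolding d_def using assms(2) spos
    by (simp add: div_less_iff_less_mult mult.commute)
  have ad: "aseq p s A d = hmap A d" using aseq_small[OF d1 ds] .
  have S: "p ^ r * aseq p s A d \<le> aseq p s A n \<and> aseq p s A n + 1 \<le> p ^ r * (aseq p s A d + 1)"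
    using split[OF d1] d_def by simp
  have "1 \<le> hmap A d" using h_pos d1 ds .
  hence "p ^ r \<le> p ^ r * aseq p s A d" using ad by simp
  moreover have "aseq p s A d + 1 \<le> p" using ad h_lt[OF ds] by simp
  hence "p ^ r * (aseq p s A d + 1) \<le> p ^ r * p" by (intro mult_le_mono2)
  ultimately show ?thesis using S by (metis le_trans mult.commute power_Suc)
qed

end




context dig begin

definition g :: real where "g = log (real s) (real p)"

lemma s_gt1: "1 < real s" using s2 by simp
lemma p_gt1: "1 < real p" using s2 sp by simp

lemma g_gt1: "1 < g"
proof -
  have "log (real s) (real s) < log (real s) (real p)" using s_gt1 sp by simp
  thus ?thesis unfolding g_def using s_gt1 by simp
qed

lemma s_powr_g: "real s powr g = real p"
  unfolding g_def using s_gt1 p_gt1 by simp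

lemma spow_powr: "(real s ^ k) powr g = real p ^ k"
proof -
  have "(real s ^ k) powr g = (real s powr real k) powr g" using s_gt1 by (simp add: powr_realpow)
  also have "\<dots> = real s powr (real k * g)" by (simp add: powr_powr)
  also have "\<dots> = (real s powr g) ^ k" using s_gt1 by (simp add: powr_power)
  finally show ?thesis using s_powr_g by simp
qed

lemma npow_lower: "real s ^ r \<le> x \<Longrightarrow> real p ^ r \<le> x powr g"
  using powr_mono2[of g "real s ^ r" x] g_gt1 spow_powr by simp

lemma npow_upper: "0 \<le> x \<Longrightarrow> x < real s ^ r \<Longrightarrow> x powr g < real p ^ r"
  using powr_less_mono2[of g x "real s ^ r"] g_gt1 spow_powr by simp

lemma bseq_lower: assumes "1 \<le> n" shows "1 / real p \<le> bseq p s A n"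
proof -
  obtain r where r: "s ^ r \<le> n" "n < s ^ (r + 1)" using ex_power_ivl1[OF s2 assms] by blast
  have ab: "p ^ r \<le> aseq p s A n" using a_bounds[of r n] r by simp
  have "real s ^ r \<le> real n" using r by (metis of_nat_le_iff of_nat_power)
  have up: "real n powr g < real p ^ (r+1)"
    using npow_upper[of "real n" "r+1"] r by (metis of_nat_0_le_iff of_nat_less_iff of_nat_power)
  have pos: "0 < real n powr g" using assms by simp
  have "1 / real p = real p ^ r / real p ^ (r+1)" using p_gt1 by simp
  also have "\<dots> \<le> real (aseq p s A n) / real p ^ (r+1)"
  proof (rule divide_right_mono)
    show "real p ^ r \<le> real (aseq p s A n)" using ab by (metis of_nat_le_iff of_nat_power)
  qed simp
  also have "\<dots> \<le> real (aseq p s A n) / real n powr g"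
    using up pos p_gt1 by (intro divide_left_mono) (auto intro!: mult_pos_pos)
  finally show ?thesis unfolding bseq_def g_def .
qed

lemma mInf_lower: "1 / real p \<le> mInf p s A"
  unfolding mInf_def by (rule cINF_greatest) (auto intro: bseq_lower)

end



lemma nat_floor_bounds:
  fixes y :: real assumes "0 \<le> y"
  shows "real (nat \<lfloor>y\<rfloor>) \<le> y" "y < real (nat \<lfloor>y\<rfloor>) + 1"
  using assms by (simp_all add: of_nat_nat)

lemma le_nat_floor: fixes y :: real shows "real M \<le> y \<Longrightarrow> M \<le> nat \<lfloor>y\<rfloor>"
  by (simp add: le_nat_iff le_floor_iff)

lemma nat_floor_less: fixes y :: real shows "0 \<le> y \<Longrightarrow> y < real M \<Longrightarrow> nat \<lfloor>y\<rfloor> < M"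
  by (simp add: nat_less_iff floor_less_iff)

lemma width_bound:
  fixes a n g :: real and P G :: nat
  assumes n1: "1 \<le> n" and a0: "0 \<le> a" and aP: "a \<le> P * n powr g" and g1: "1 \<le> g"
    and Gg: "g \<le> real G"
  shows "(a + 1) / n powr g - a / (n + 1) powr g \<le> (1 + P * G) / n"
proof -
  define u where "u = n powr g"
  define v where "v = (n + 1) powr g"
  have u0: "0 < u" using n1 unfolding u_def by simp
  have uv: "u \<le> v" unfolding u_def v_def using n1 g1 by (intro powr_mono2) auto
  have v0: "0 < v" using u0 uv by simp
  have un: "n \<le> u" unfolding u_def using powr_mono[of 1 g n] n1 g1 by simp
  have q: "u / v = (n / (n+1)) powr g" unfolding u_def v_def using n1 by (simp add: powr_divide)
  have q01: "0 \<le> n / (n+1)" "n / (n+1) \<le> 1" using n1 by auto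
  have "(n / (n+1)) powr real G \<le> (n / (n+1)) powr g"
    using powr_mono'[OF Gg q01] .
  moreover have "(n / (n+1)) powr real G = (n / (n+1)) ^ G"
    using n1 by (intro powr_realpow) simp
  moreover have "n / (n+1) = 1 + (- 1 / (n+1))" using n1 by (simp add: field_simps)
  moreover have "1 + real G * (- 1 / (n+1)) \<le> (1 + (- 1 / (n+1))) ^ G"
    using n1 by (intro Bernoulli_inequality) (simp add: field_simps)
  ultimately have "1 + real G * (- 1 / (n+1)) \<le> (n / (n+1)) powr g" by simp
  hence B: "1 - real G / (n+1) \<le> u / v" using q by simp
  have "(v - u) / v \<le> real G / (n+1)" using B v0 by (simp add: diff_divide_distrib)
  also have "\<dots> \<le> real G / n" using n1 by (simp add: frac_le)
  finally have vu: "(v - u) / v \<le> real G / n" .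
  have au: "a / u \<le> real P" using aP u0 unfolding u_def by (simp add: divide_le_eq)
  have "(a + 1) / u - a / v = 1 / u + (a / u) * ((v - u) / v)"
    using u0 v0 by (simp add: field_simps)
  also have "\<dots> \<le> 1 / n + real P * (real G / n)"
  proof (rule add_mono)
    show "1 / u \<le> 1 / n" using un n1 by (simp add: frac_le)
    have "0 \<le> (v - u) / v" using uv v0 by simp
    moreover have "0 \<le> a / u" using a0 u0 by simp
    ultimately show "a / u * ((v - u) / v) \<le> real P * (real G / n)"
      using au vu by (intro mult_mono) auto
  qed
  also have "\<dots> = (1 + P * G) / n" by (simp add: add_divide_distrib)
  finally show ?thesis unfolding u_def v_def .
qed




context dig begin

definition nk :: "real \<Rightarrow> nat \<Rightarrow> nat" where "nk x k = nat \<lfloor>real s ^ k * x\<rfloor>"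
definition lo :: "nat \<Rightarrow> real" where "lo n = real (aseq p s A n) / (real n + 1) powr g"
definition hi :: "nat \<Rightarrow> real" where "hi n = (real (aseq p s A n) + 1) / real n powr g"
definition Q :: "real \<Rightarrow> nat \<Rightarrow> real" where
  "Q x m = real (areal p s A (real s ^ m * x)) / (real s ^ m * x) powr g"

lemma lam_eq: "lam p s A x = lim (Q x)"
  unfolding lam_def Q_def g_def by simp

lemma nk_range:
  assumes x: "x \<in> {1/real s..<1}" and k: "1 \<le> k"
  shows "s ^ (k-1) \<le> nk x k \<and> nk x k < s ^ k"
proof -
  have sk: "real s ^ k = real s * real s ^ (k-1)" using k by (metis power_Suc Suc_diff_1 less_le_trans zero_less_one)
  have "real s ^ (k-1) = real s ^ k * (1 / real s)" using sk s_gt1 by simp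
  also have "\<dots> \<le> real s ^ k * x" using x s_gt1 by (intro mult_left_mono) auto
  finally have 1: "real (s ^ (k-1)) \<le> real s ^ k * x" by simp
  have 2: "real s ^ k * x < real (s ^ k)" using x s_gt1 by simp
  have x0: "0 \<le> real s ^ k * x" using x s_gt1 by (simp add: order_trans[of 0 "1/real s" x])
  show ?thesis unfolding nk_def using le_nat_floor[OF 1] nat_floor_less[OF x0 2] by simp
qed

lemma nk_div:
  assumes x0: "0 \<le> x" and km: "k \<le> m"
  shows "nk x m div s ^ (m-k) = nk x k"
proof -
  define c where "c = s ^ (m-k)"
  define n where "n = nk x k"
  define y where "y = real s ^ k * x"
  have y0: "0 \<le> y" unfolding y_def using x0 by simp
  have ym: "real s ^ m * x = real c * y" unfolding c_def y_def using km
    by (simp add: power_add[symmetric])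
  have nb: "real n \<le> y" "y < real n + 1" unfolding n_def nk_def y_def using nat_floor_bounds[OF y0[unfolded y_def]] by auto
  have c0: "0 < real c" unfolding c_def using s2 by simp
  have "real (c * n) \<le> real s ^ m * x" using ym nb c0 by simp
  hence A: "c * n \<le> nk x m" unfolding nk_def by (rule le_nat_floor)
  have "real c * y < real c * (real n + 1)" using nb c0 by (intro mult_strict_left_mono) auto
  hence "real s ^ m * x < real (c * Suc n)" using ym by (simp add: algebra_simps)
  hence B: "nk x m < c * Suc n" unfolding nk_def using ym y0 c0 by (intro nat_floor_less) auto
  show ?thesis using div_nat_eqI[OF A B] unfolding c_def n_def .
qed

lemma Q_bounds:
  assumes x: "x \<in> {1/real s..<1}" and k: "1 \<le> k" and km: "k \<le> m"
  shows "lo (nk x k) \<le> Q x m \<and> Q x m \<le> hi (nk x k)"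
proof -
  define r where "r = m - k"
  define n where "n = nk x k"
  define N where "N = nk x m"
  have x0: "0 \<le> x" using x s_gt1 by (simp add: order_trans[of 0 "1/real s" x])
  have "1 \<le> s ^ (k-1)" using s2 by simp
  hence n1: "1 \<le> n" using nk_range[OF x k] unfolding n_def by linarith
  have dv: "N div s ^ r = n" unfolding N_def n_def r_def using nk_div[OF x0 km] .
  have sp: "p ^ r * aseq p s A n \<le> aseq p s A N \<and> aseq p s A N + 1 \<le> p ^ r * (aseq p s A n + 1)"
    using split[OF n1 dv] .
  define aN where "aN = real (aseq p s A N)"
  define an where "an = real (aseq p s A n)"
  have L1: "real p ^ r * an \<le> aN" unfolding aN_def an_def using sp
    by (metis of_nat_le_iff of_nat_mult of_nat_power)
  have "real (aseq p s A N + 1) \<le> real (p ^ r * (aseq p s A n + 1))" using sp by (simp only: of_nat_le_iff)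
  hence L2: "aN \<le> real p ^ r * (an + 1)" unfolding aN_def an_def by (simp add: algebra_simps)
  define y where "y = real s ^ k * x"
  have y0: "0 \<le> y" unfolding y_def using x0 by simp
  have nb: "real n \<le> y" "y < real n + 1" unfolding n_def nk_def y_def using nat_floor_bounds[OF y0[unfolded y_def]] by auto
  have ym: "real s ^ m * x = real s ^ r * y" unfolding r_def y_def using km
    by (simp add: power_add[symmetric])
  have sr0: "0 < real s ^ r" using s_gt1 by simp
  define D where "D = (real s ^ m * x) powr g"
  have D1: "real p ^ r * real n powr g \<le> D"
  proof -
    have "(real s ^ r * real n) powr g \<le> (real s ^ r * y) powr g"
      using nb sr0 g_gt1 by (intro powr_mono2) auto
    thus ?thesis unfolding D_def ym by (simp add: powr_mult spow_powr)
  qed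
  have D2: "D \<le> real p ^ r * (real n + 1) powr g"
  proof -
    have "(real s ^ r * y) powr g \<le> (real s ^ r * (real n + 1)) powr g"
      using nb sr0 g_gt1 y0 by (intro powr_mono2) auto
    thus ?thesis unfolding D_def ym by (simp add: powr_mult spow_powr)
  qed
  have pr0: "0 < real p ^ r" using p_gt1 by simp
  have ng0: "0 < real n powr g" using n1 by simp
  have n1g0: "0 < (real n + 1) powr g" using n1 by simp
  have an0: "0 \<le> an" unfolding an_def by simp
  have Qe: "Q x m = aN / D" unfolding Q_def aN_def D_def N_def nk_def areal_def by simp
  have D0: "0 < D" using D1 pr0 ng0 by (meson mult_pos_pos order_less_le_trans)
  have up: "aN / D \<le> hi n"
  proof -
    have "aN / D \<le> (real p ^ r * (an + 1)) / (real p ^ r * real n powr g)"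
      using L2 D1 D0 pr0 ng0 an0 by (intro frac_le) auto
    also have "\<dots> = hi n" unfolding hi_def an_def using pr0 p_gt1 by simp
    finally show ?thesis .
  qed
  have low: "lo n \<le> aN / D"
  proof -
    have "lo n = (real p ^ r * an) / (real p ^ r * (real n + 1) powr g)"
      unfolding lo_def an_def using pr0 p_gt1 by simp
    also have "\<dots> \<le> aN / D"
      using L1 D2 D0 pr0 an0 by (intro frac_le) (auto intro: mult_nonneg_nonneg simp: aN_def)
    finally show ?thesis .
  qed
  show ?thesis using up low Qe n_def by simp
qed

definition G :: nat where "G = nat \<lceil>g\<rceil>"

lemma width_nk:
  assumes x: "x \<in> {1/real s..<1}" and k: "1 \<le> k"
  shows "hi (nk x k) - lo (nk x k) \<le> (1 + p * G) / real (nk x k)"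
proof -
  define n where "n = nk x k"
  have r: "s ^ (k-1) \<le> n" "n < s ^ Suc (k-1)" using nk_range[OF x k] k unfolding n_def by auto
  have ab: "aseq p s A n + 1 \<le> p ^ Suc (k-1)" using a_bounds[OF r] by simp
  have "1 \<le> s ^ (k-1)" using s2 by simp
  hence n1: "1 \<le> n" using r(1) by linarith
  have "real (s ^ (k-1)) \<le> real n" using r(1) by (simp only: of_nat_le_iff)
  hence lowg: "real p ^ (k-1) \<le> real n powr g" using npow_lower by simp
  have "real (aseq p s A n + 1) \<le> real (p ^ Suc (k-1))" using ab by (simp only: of_nat_le_iff)
  hence "real (aseq p s A n) \<le> real p ^ Suc (k-1)" by simp
  also have "\<dots> = real p * real p ^ (k-1)" by simp
  also have "\<dots> \<le> real p * real n powr g" using lowg by (intro mult_left_mono) auto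
  finally have aP: "real (aseq p s A n) \<le> real p * real n powr g" .
  have Gg: "g \<le> real G" unfolding G_def by linarith
  have "(real (aseq p s A n) + 1) / real n powr g - real (aseq p s A n) / (real n + 1) powr g
      \<le> (1 + p * G) / real n"
    using width_bound[of "real n" "real (aseq p s A n)" p g G] n1 aP g_gt1 Gg by simp
  thus ?thesis unfolding hi_def lo_def n_def .
qed

lemma Q_conv:
  assumes x: "x \<in> {1/real s..<1}"
  shows "convergent (Q x)"
proof -
  have "Cauchy (Q x)"
  proof (rule CauchyI)
    fix e :: real assume e: "0 < e"
    define C where "C = real (1 + p * G)"
    have C0: "0 < C" unfolding C_def by (simp add: add_pos_nonneg)
    obtain M where M: "C / e < real s ^ M" using real_arch_pow[OF s_gt1] by blast
    define K where "K = Suc M"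
    have K1: "1 \<le> K" unfolding K_def by simp
    have "s ^ M \<le> nk x K" using nk_range[OF x K1] unfolding K_def by simp
    hence "real (s ^ M) \<le> real (nk x K)" by (simp only: of_nat_le_iff)
    hence nK: "real s ^ M \<le> real (nk x K)" by simp
    have "0 < real s ^ M" using s_gt1 by simp
    hence nK0: "0 < real (nk x K)" using nK by linarith
    have "C / real (nk x K) \<le> C / real s ^ M"
      using nK C0 s_gt1 nK0 by (intro divide_left_mono) auto
    also have "\<dots> < e" using M e s_gt1 by (simp add: divide_less_eq mult.commute)
    finally have W: "hi (nk x K) - lo (nk x K) < e" using width_nk[OF x K1] unfolding C_def by linarith
    show "\<exists>M. \<forall>m\<ge>M. \<forall>n\<ge>M. norm (Q x m - Q x n) < e"
    proof (intro exI allI impI)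
      fix m n assume "K \<le> m" "K \<le> n"
      with Q_bounds[OF x K1] have "lo (nk x K) \<le> Q x m \<and> Q x m \<le> hi (nk x K)"
        "lo (nk x K) \<le> Q x n \<and> Q x n \<le> hi (nk x K)" by auto
      thus "norm (Q x m - Q x n) < e" using W by auto
    qed
  qed
  thus ?thesis by (simp add: Cauchy_convergent_iff)
qed

lemma lam_bounds:
  assumes x: "x \<in> {1/real s..<1}" and k: "1 \<le> k"
  shows "lo (nk x k) \<le> lam p s A x \<and> lam p s A x \<le> hi (nk x k)"
proof -
  have L: "Q x \<longlonglongrightarrow> lam p s A x" using Q_conv[OF x] unfolding lam_eq by (simp add: convergent_LIMSEQ_iff)
  have "lo (nk x k) \<le> lam p s A x"
    using L by (rule LIMSEQ_le_const) (use Q_bounds[OF x k] in auto)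
  moreover have "lam p s A x \<le> hi (nk x k)"
    using L by (rule LIMSEQ_le_const2) (use Q_bounds[OF x k] in auto)
  ultimately show ?thesis by simp
qed

end



lemma card_spread:
  fixes S :: "nat set" and D :: real
  assumes fin: "finite S" and D0: "0 \<le> D"
    and spread: "\<And>a b. a \<in> S \<Longrightarrow> b \<in> S \<Longrightarrow> a < b \<Longrightarrow> real b - real a - 1 < D"
  shows "real (card S) \<le> D + 2"
proof (cases "S = {}")
  case True thus ?thesis using D0 by simp
next
  case False
  define m where "m = Min S"
  have mS: "m \<in> S" unfolding m_def using fin False by simp
  have sub: "S \<subseteq> {m..m + 1 + nat \<lfloor>D\<rfloor>}"
  proof
    fix b assume b: "b \<in> S"
    have mb: "m \<le> b" unfolding m_def using fin b by simp
    have "real b - real m - 1 \<le> D"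
    proof (cases "m < b")
      case True thus ?thesis using spread[OF mS b] by simp
    next
      case False thus ?thesis using mb D0 by simp
    qed
    hence "int b - int m - 1 \<le> \<lfloor>D\<rfloor>" by (simp add: le_floor_iff)
    thus "b \<in> {m..m + 1 + nat \<lfloor>D\<rfloor>}" using mb by simp
  qed
  have "card S \<le> card {m..m + 1 + nat \<lfloor>D\<rfloor>}" using sub by (intro card_mono) auto
  also have "\<dots> = 2 + nat \<lfloor>D\<rfloor>" by simp
  finally have "real (card S) \<le> 2 + real (nat \<lfloor>D\<rfloor>)" by linarith
  also have "real (nat \<lfloor>D\<rfloor>) \<le> D" using D0 by linarith
  finally show ?thesis by simp
qed

lemma powr_gap:
  fixes u v g :: real
  assumes u: "0 < u" "u \<le> v" and g: "1 \<le> g"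
  shows "(v - u) * u powr (g - 1) \<le> v powr g - u powr g"
proof -
  have v0: "0 < v" using u by simp
  have "u powr (g - 1) \<le> v powr (g - 1)" using u g by (intro powr_mono2) auto
  hence "v * u powr (g - 1) \<le> v * v powr (g - 1)" using v0 by simp
  moreover have "v * v powr (g - 1) = v powr g" using v0 by (simp add: powr_mult_base)
  moreover have "u * u powr (g - 1) = u powr g" using u by (simp add: powr_mult_base)
  ultimately show ?thesis by (simp add: algebra_simps)
qed

context dig begin

definition Bset :: "real \<Rightarrow> nat \<Rightarrow> nat set" where
  "Bset \<alpha> k = {n. s ^ (k-1) \<le> n \<and> n < s ^ k \<and> \<alpha> * real n powr g < real (aseq p s A n) + 1
     \<and> real (aseq p s A n) \<le> \<alpha> * (real n + 1) powr g}"

lemma finite_Bset: "finite (Bset \<alpha> k)"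
  unfolding Bset_def by (rule finite_subset[of _ "{..<s^k}"]) auto

lemma block_spread:
  assumes al: "0 < \<alpha>" and k: "k = j + r" and j: "1 \<le> j"
    and n: "n \<in> Bset \<alpha> k" and n': "n' \<in> Bset \<alpha> k" and nn: "n < n'"
    and q: "n div s ^ r = n' div s ^ r"
  shows "real n' - real n - 1 < real p ^ r / (\<alpha> * (real p ^ (k-1) / real s ^ (k-1)))"
proof -
  define qq where "qq = n div s ^ r"
  have nlow: "s ^ (k-1) \<le> n" using n unfolding Bset_def by simp
  have "s ^ r \<le> s ^ (k-1)" using k j s2 by (intro power_increasing) auto
  hence "s ^ r \<le> n" using nlow by simp
  hence q1: "1 \<le> qq" unfolding qq_def using s2 by (simp add: less_eq_div_iff_mult_less_eq)
  have S1: "p ^ r * aseq p s A qq \<le> aseq p s A n" using split[OF q1, of n r] qq_def by simp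
  have S2: "aseq p s A n' + 1 \<le> p ^ r * (aseq p s A qq + 1)" using split[OF q1, of n' r] qq_def q by simp
  define aq where "aq = real (aseq p s A qq)"
  have R1: "real p ^ r * aq \<le> real (aseq p s A n)"
  proof -
    have "real (p ^ r * aseq p s A qq) \<le> real (aseq p s A n)" using S1 by (simp only: of_nat_le_iff)
    thus ?thesis unfolding aq_def by simp
  qed
  have R2: "real (aseq p s A n') + 1 \<le> real p ^ r * (aq + 1)"
  proof -
    have "real (aseq p s A n' + 1) \<le> real (p ^ r * (aseq p s A qq + 1))" using S2 by (simp only: of_nat_le_iff)
    thus ?thesis unfolding aq_def by (simp add: algebra_simps)
  qed
  have B1: "\<alpha> * real n' powr g < real (aseq p s A n') + 1" using n' unfolding Bset_def by simp
  have B2: "real (aseq p s A n) \<le> \<alpha> * (real n + 1) powr g" using n unfolding Bset_def by simp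
  have main: "\<alpha> * (real n' powr g - (real n + 1) powr g) < real p ^ r"
    using B1 B2 R1 R2 by (simp add: algebra_simps)
  define u where "u = real n + 1"
  have u0: "0 < u" unfolding u_def by simp
  have uv: "u \<le> real n'" unfolding u_def using nn by simp
  have gap: "(real n' - u) * u powr (g - 1) \<le> real n' powr g - u powr g"
    using powr_gap[OF u0 uv] g_gt1 by simp
  define \<theta> where "\<theta> = real p ^ (k-1) / real s ^ (k-1)"
  have th: "\<theta> \<le> u powr (g - 1)"
  proof -
    have "real s ^ (k-1) \<le> u" unfolding u_def using nlow
      by (metis of_nat_le_iff of_nat_power le_add_same_cancel1 zero_le_one order_trans)
    hence "(real s ^ (k-1)) powr (g - 1) \<le> u powr (g - 1)" using g_gt1 by (intro powr_mono2) auto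
    moreover have "(real s ^ (k-1)) powr (g - 1) = \<theta>"
      unfolding \<theta>_def using s_gt1 by (simp add: powr_diff spow_powr)
    ultimately show ?thesis by simp
  qed
  have th0: "0 < \<theta>" unfolding \<theta>_def using s_gt1 p_gt1 by simp
  have d0: "0 \<le> real n' - u" using uv by simp
  have "\<alpha> * ((real n' - u) * \<theta>) \<le> \<alpha> * ((real n' - u) * u powr (g - 1))"
    using th d0 al by (intro mult_left_mono) auto
  also have "\<dots> \<le> \<alpha> * (real n' powr g - u powr g)" using gap al by (intro mult_left_mono) auto
  also have "\<dots> < real p ^ r" using main unfolding u_def .
  finally have "(real n' - u) * (\<alpha> * \<theta>) < real p ^ r" by (simp add: algebra_simps)
  hence "real n' - u < real p ^ r / (\<alpha> * \<theta>)" using al th0 by (simp add: less_divide_eq)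
  thus ?thesis unfolding u_def \<theta>_def by simp
qed

lemma card_Bset_block:
  assumes al: "0 < \<alpha>" and k: "k = j + r" and j: "1 \<le> j"
  shows "real (card (Bset \<alpha> k)) \<le> real s ^ j * (real p ^ r / (\<alpha> * (real p ^ (k-1) / real s ^ (k-1))) + 2)"
proof -
  define D where "D = real p ^ r / (\<alpha> * (real p ^ (k-1) / real s ^ (k-1)))"
  define C where "C q = {n \<in> Bset \<alpha> k. n div s ^ r = q}" for q
  have D0: "0 \<le> D" unfolding D_def using al by simp
  have sub: "Bset \<alpha> k \<subseteq> (\<Union>q\<in>{..<s^j}. C q)"
  proof
    fix n assume n: "n \<in> Bset \<alpha> k"
    hence "n < s ^ r * s ^ j" using k unfolding Bset_def by (simp add: power_add mult.commute)
    hence "n div s ^ r < s ^ j" using s2 by (simp add: div_less_iff_less_mult mult.commute)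
    thus "n \<in> (\<Union>q\<in>{..<s^j}. C q)" using n unfolding C_def by auto
  qed
  have cq: "real (card (C q)) \<le> D + 2" for q
  proof (rule card_spread)
    show "finite (C q)" unfolding C_def using finite_Bset by simp
    show "0 \<le> D" by (rule D0)
    fix a b assume "a \<in> C q" "b \<in> C q" "a < b"
    thus "real b - real a - 1 < D" unfolding C_def D_def
      using block_spread[OF al k j] by auto
  qed
  have "card (Bset \<alpha> k) \<le> card (\<Union>q\<in>{..<s^j}. C q)"
    using sub by (intro card_mono) (auto simp: C_def finite_Bset)
  also have "\<dots> \<le> (\<Sum>q\<in>{..<s^j}. card (C q))" by (rule card_UN_le) simp
  finally have "real (card (Bset \<alpha> k)) \<le> (\<Sum>q\<in>{..<s^j}. real (card (C q)))"
    by (metis of_nat_le_iff of_nat_sum)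
  also have "\<dots> \<le> (\<Sum>q\<in>{..<s^j}. D + 2)" by (intro sum_mono cq)
  also have "\<dots> = real s ^ j * (D + 2)" by simp
  finally show ?thesis unfolding D_def .
qed

lemma card_Bset_small:
  assumes al: "0 < \<alpha>" and e: "0 < \<epsilon>"
  shows "\<exists>k\<ge>1. real (card (Bset \<alpha> k)) \<le> \<epsilon> * real s ^ k"
proof -
  have sp1: "real s / real p < 1" using sp s2 by simp
  obtain J0 where J0: "(real s / real p) ^ J0 < \<epsilon> * \<alpha> / 2"
    using real_arch_pow_inv[of "\<epsilon> * \<alpha> / 2" "real s / real p"] sp1 al e by auto
  obtain r where r: "4 / \<epsilon> < real s ^ r" using real_arch_pow[OF s_gt1] by blast
  define j where "j = Suc J0"
  define k where "k = j + r"
  have k1: "1 \<le> k" unfolding k_def j_def by simp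
  have CB: "real (card (Bset \<alpha> k)) \<le> real s ^ j * (real p ^ r / (\<alpha> * (real p ^ (k-1) / real s ^ (k-1))) + 2)"
    by (rule card_Bset_block[OF al k_def]) (simp add: j_def)
  have km: "k - 1 = J0 + r" unfolding k_def j_def by simp
  have s0: "0 < real s" and p0: "0 < real p" using s_gt1 p_gt1 by auto
  have T1: "real s ^ j * (real p ^ r / (\<alpha> * (real p ^ (k-1) / real s ^ (k-1))))
      = real s ^ k * ((real s / real p) ^ J0) / \<alpha>"
    unfolding km unfolding k_def j_def using s0 p0 al
    by (simp add: power_add power_divide field_simps)
  have "real s ^ k * ((real s / real p) ^ J0) / \<alpha> \<le> real s ^ k * (\<epsilon> * \<alpha> / 2) / \<alpha>"
    using J0 al s0 by (intro divide_right_mono mult_left_mono) auto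
  also have "\<dots> = \<epsilon> / 2 * real s ^ k" using al by simp
  finally have P1: "real s ^ j * (real p ^ r / (\<alpha> * (real p ^ (k-1) / real s ^ (k-1)))) \<le> \<epsilon> / 2 * real s ^ k"
    using T1 by simp
  have "4 < \<epsilon> * real s ^ r" using r e by (simp add: divide_less_eq mult.commute)
  hence "real s ^ j * 4 \<le> real s ^ j * (\<epsilon> * real s ^ r)" using s0 by simp
  hence P2: "real s ^ j * 2 \<le> \<epsilon> / 2 * real s ^ k" unfolding k_def by (simp add: power_add algebra_simps)
  define Dv where "Dv = real p ^ r / (\<alpha> * (real p ^ (k-1) / real s ^ (k-1)))"
  have CB': "real (card (Bset \<alpha> k)) \<le> real s ^ j * Dv + real s ^ j * 2"
    using CB unfolding Dv_def by (simp only: distrib_left)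
  have "real (card (Bset \<alpha> k)) \<le> \<epsilon> / 2 * real s ^ k + \<epsilon> / 2 * real s ^ k"
    using CB' P1[folded Dv_def] P2 by linarith
  thus ?thesis using k1 by (intro exI[of _ k]) simp
qed

end



lemma mono_part:
  fixes x :: "nat \<Rightarrow> real"
  assumes "\<forall>i<n. x i < x (Suc i)" "i \<le> j" "j \<le> n"
  shows "x i \<le> x j"
  using assms(2,3)
proof (induction j)
  case 0 thus ?case by simp
next
  case (Suc j)
  show ?case
  proof (cases "i = Suc j")
    case True thus ?thesis by simp
  next
    case False
    hence "x i \<le> x j" using Suc by simp
    also have "x j < x (Suc j)" using assms(1) Suc.prems by simp
    finally show ?thesis by simp
  qed
qed

lemma integral_partition:
  fixes x :: "nat \<Rightarrow> real" and \<phi> :: "real \<Rightarrow> real"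
  assumes inc: "\<forall>i<n. x i < x (Suc i)" and int: "\<phi> integrable_on {x 0..x n}"
  shows "integral {x 0..x n} \<phi> = (\<Sum>i<n. integral {x i..x (Suc i)} \<phi>)"
  using inc int
proof (induction n)
  case 0 thus ?case by simp
next
  case (Suc n)
  have inc': "\<forall>i<n. x i < x (Suc i)" using Suc.prems by simp
  have m: "x 0 \<le> x n" using mono_part[OF inc', of 0 n] by simp
  have m2: "x n \<le> x (Suc n)" using Suc.prems(1) lessI less_imp_le by blast
  have int': "\<phi> integrable_on {x 0..x n}"
    using integrable_subinterval_real[OF Suc.prems(2)] m2 by auto
  have "integral {x 0..x (Suc n)} \<phi> = integral {x 0..x n} \<phi> + integral {x n..x (Suc n)} \<phi>"
    using Henstock_Kurzweil_Integration.integral_combine[OF m m2 Suc.prems(2)] by simp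
  thus ?case using Suc.IH[OF inc' int'] by simp
qed

lemma riemann_from_modulus:
  fixes f :: "real \<Rightarrow> real" and a b :: real
  assumes ab: "a < b" and fi: "f integrable_on {a..b}"
    and H: "\<And>e. 0 < e \<Longrightarrow> \<exists>\<delta>>0. \<exists>\<omega>. \<omega> integrable_on {a..b} \<and> integral {a..b} \<omega> \<le> e \<and>
        (\<forall>t\<in>{a..b}. \<forall>y\<in>{a..b}. \<bar>t - y\<bar> < \<delta> \<longrightarrow> \<bar>f t - f y\<bar> \<le> \<omega> y + e)"
  shows "riemann_integrable f a b"
  unfolding riemann_integrable_def
proof (rule exI[of _ "integral {a..b} f"], intro allI impI)
  fix \<epsilon> :: real assume \<epsilon>: "0 < \<epsilon>"
  define e where "e = \<epsilon> / (2 * (1 + (b - a)))"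
  have e0: "0 < e" unfolding e_def using \<epsilon> ab by simp
  obtain \<delta> \<omega> where \<delta>: "0 < \<delta>" and wi: "\<omega> integrable_on {a..b}" and wI: "integral {a..b} \<omega> \<le> e"
    and mod: "\<forall>t\<in>{a..b}. \<forall>y\<in>{a..b}. \<bar>t - y\<bar> < \<delta> \<longrightarrow> \<bar>f t - f y\<bar> \<le> \<omega> y + e"
    using H[OF e0] by blast
  show "\<exists>\<delta>>0. \<forall>(n::nat) (x::nat \<Rightarrow> real) (t::nat \<Rightarrow> real).
        (0 < n \<and> x 0 = a \<and> x n = b \<and>
         (\<forall>i<n. x i < x (Suc i) \<and> x (Suc i) - x i < \<delta> \<and> x i \<le> t i \<and> t i \<le> x (Suc i)))
        \<longrightarrow> \<bar>(\<Sum>i<n. f (t i) * (x (Suc i) - x i)) - integral {a..b} f\<bar> < \<epsilon>"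
  proof (intro exI[of _ \<delta>] conjI allI impI \<delta>)
    fix n :: nat and x t :: "nat \<Rightarrow> real"
    assume P: "0 < n \<and> x 0 = a \<and> x n = b \<and>
         (\<forall>i<n. x i < x (Suc i) \<and> x (Suc i) - x i < \<delta> \<and> x i \<le> t i \<and> t i \<le> x (Suc i))"
    have inc: "\<forall>i<n. x i < x (Suc i)" using P by simp
    have xa: "x 0 = a" and xb: "x n = b" using P by auto
    have sub: "{x i..x (Suc i)} \<subseteq> {a..b}" if "i < n" for i
    proof -
      have "x 0 \<le> x i" using mono_part[OF inc, of 0 i] that by simp
      moreover have "x (Suc i) \<le> x n" using mono_part[OF inc, of "Suc i" n] that by simp
      ultimately show ?thesis using xa xb by auto
    qed
    define \<psi> where "\<psi> y = \<omega> y + e" for y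
    have psi_i: "\<psi> integrable_on {a..b}" unfolding \<psi>_def using wi by (intro integrable_add) auto
    have Ipsi: "integral {a..b} \<psi> = integral {a..b} \<omega> + e * (b - a)"
      unfolding \<psi>_def using wi ab by (subst integral_add) auto
    have piece: "\<bar>f (t i) * (x (Suc i) - x i) - integral {x i..x (Suc i)} f\<bar> \<le> integral {x i..x (Suc i)} \<psi>"
      if i: "i < n" for i
    proof -
      have si: "{x i..x (Suc i)} \<subseteq> {a..b}" using sub[OF i] .
      have le: "x i \<le> x (Suc i)" using inc i by (simp add: less_imp_le)
      have fi': "f integrable_on {x i..x (Suc i)}" using integrable_subinterval_real[OF fi si] .
      have pi': "\<psi> integrable_on {x i..x (Suc i)}" using integrable_subinterval_real[OF psi_i si] .
      have ci: "(\<lambda>y. f (t i)) integrable_on {x i..x (Suc i)}" by (rule integrable_const_ivl)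
      have "f (t i) * (x (Suc i) - x i) - integral {x i..x (Suc i)} f
          = integral {x i..x (Suc i)} (\<lambda>y. f (t i) - f y)"
        using le by (subst integral_diff[OF ci fi']) (simp add: mult.commute)
      also have "\<bar>\<dots>\<bar> \<le> integral {x i..x (Suc i)} \<psi>"
      proof -
        have "norm (integral {x i..x (Suc i)} (\<lambda>y. f (t i) - f y)) \<le> integral {x i..x (Suc i)} \<psi>"
        proof (rule Henstock_Kurzweil_Integration.integral_norm_bound_integral)
          show "(\<lambda>y. f (t i) - f y) integrable_on {x i..x (Suc i)}" using ci fi' by (rule integrable_diff)
          show "\<psi> integrable_on {x i..x (Suc i)}" by (rule pi')
          fix y assume y: "y \<in> {x i..x (Suc i)}"
          have ti: "t i \<in> {x i..x (Suc i)}" using P i by auto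
          have "\<bar>t i - y\<bar> \<le> x (Suc i) - x i" using y ti by auto
          also have "\<dots> < \<delta>" using P i by auto
          finally have "\<bar>t i - y\<bar> < \<delta>" .
          moreover have "t i \<in> {a..b}" "y \<in> {a..b}" using ti y si by auto
          ultimately show "norm (f (t i) - f y) \<le> \<psi> y" using mod unfolding \<psi>_def by auto
        qed
        thus ?thesis by simp
      qed
      finally show ?thesis .
    qed
    have "integral {a..b} f = (\<Sum>i<n. integral {x i..x (Suc i)} f)"
      using integral_partition[OF inc] fi xa xb by simp
    hence "\<bar>(\<Sum>i<n. f (t i) * (x (Suc i) - x i)) - integral {a..b} f\<bar>
        = \<bar>\<Sum>i<n. (f (t i) * (x (Suc i) - x i) - integral {x i..x (Suc i)} f)\<bar>"
      by (simp add: sum_subtractf)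
    also have "\<dots> \<le> (\<Sum>i<n. \<bar>f (t i) * (x (Suc i) - x i) - integral {x i..x (Suc i)} f\<bar>)"
      by (rule sum_abs)
    also have "\<dots> \<le> (\<Sum>i<n. integral {x i..x (Suc i)} \<psi>)"
      by (intro sum_mono piece) simp
    also have "\<dots> = integral {a..b} \<psi>"
      using integral_partition[OF inc] psi_i xa xb by simp
    also have "\<dots> \<le> e + e * (b - a)" using Ipsi wI by simp
    also have "\<dots> = e * (1 + (b - a))" by (simp add: algebra_simps)
    also have "\<dots> = \<epsilon> / 2" unfolding e_def using ab by (simp add: field_simps)
    also have "\<dots> < \<epsilon>" using \<epsilon> by simp
    finally show "\<bar>(\<Sum>i<n. f (t i) * (x (Suc i) - x i)) - integral {a..b} f\<bar> < \<epsilon>" .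
  qed
qed




context dig begin

lemma Q_meas: "(\<lambda>x. Q x k) \<in> borel_measurable borel"
  unfolding Q_def areal_def by measurable

lemma lam_meas: "lam p s A \<in> borel_measurable borel"
proof -
  have "(\<lambda>x. lim (\<lambda>k. Q x k)) \<in> borel_measurable borel"
    by (rule borel_measurable_lim_metric) (rule Q_meas)
  moreover have "lam p s A = (\<lambda>x. lim (\<lambda>k. Q x k))" using lam_eq by (simp add: fun_eq_iff)
  ultimately show ?thesis by simp
qed

lemma E_borel: "Eset p s A \<alpha> \<in> sets borel"
proof -
  have "Eset p s A \<alpha> = {1/real s..<1} \<inter> {x. lam p s A x \<le> \<alpha>}" unfolding Eset_def by auto
  moreover have "{x \<in> space borel. lam p s A x \<le> \<alpha>} \<in> sets borel"
    by (rule borel_measurable_le[OF lam_meas borel_measurable_const])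
  moreover have "{x \<in> space borel. lam p s A x \<le> \<alpha>} = {x. lam p s A x \<le> \<alpha>}" by simp
  moreover have "{1/real s..<1::real} \<in> sets borel" by simp
  ultimately show ?thesis by (metis sets.Int)
qed

lemma f_integrable:
  "(\<lambda>x. indicator (Eset p s A \<alpha>) x / x) integrable_on {1/real s..1}"
proof (rule measurable_bounded_by_integrable_imp_integrable_real)
  have "(\<lambda>x. indicator (Eset p s A \<alpha>) x / x :: real) \<in> borel_measurable borel"
    by (rule borel_measurable_divide[OF borel_measurable_indicator[OF E_borel] measurable_id])
  thus "(\<lambda>x. indicator (Eset p s A \<alpha>) x / x :: real) \<in> borel_measurable (lebesgue_on {1/real s..1})"
    by (intro measurable_restrict_space1 measurable_completion) simp
  show "(\<lambda>x. real s) integrable_on {1/real s..1}" by (rule integrable_const_ivl)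
  show "{1/real s..1} \<in> sets lebesgue" by simp
  fix x assume x: "x \<in> {1/real s..1}"
  have "0 < 1 / real s" using s_gt1 by simp
  moreover have "1 / real s \<le> x" using x by simp
  ultimately have x0: "0 < x" by linarith
  have "\<bar>indicator (Eset p s A \<alpha>) x / x\<bar> \<le> 1 / x" using x0
    by (simp add: indicator_def)
  also have "\<dots> \<le> real s" using x x0 s_gt1 by (simp add: divide_le_eq mult.commute)
  finally show "\<bar>indicator (Eset p s A \<alpha>) x / x\<bar> \<le> real s" .
qed

end



lemma ind_int:
  fixes a b c d :: real assumes cd: "c \<le> d"
  shows "(indicator {c..d} :: real \<Rightarrow> real) integrable_on {a..b}"
    and "integral {a..b} (indicator {c..d} :: real \<Rightarrow> real) \<le> d - c"
proof -
  have eq: "(indicator {c..d} :: real \<Rightarrow> real) = (\<lambda>x. if x \<in> {c..d} then 1 else 0)"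
    by (simp add: fun_eq_iff indicator_def)
  have I: "{c..d} \<inter> {a..b} = {max c a..min d b}" by auto
  show "(indicator {c..d} :: real \<Rightarrow> real) integrable_on {a..b}"
    unfolding eq integrable_restrict_Int I by (rule integrable_const_ivl)
  have "integral {a..b} (indicator {c..d} :: real \<Rightarrow> real) = integral {max c a..min d b} (\<lambda>x. 1::real)"
    unfolding eq Henstock_Kurzweil_Integration.integral_restrict_Int I ..
  also have "\<dots> \<le> d - c" using cd by (simp add: min_def max_def)
  finally show "integral {a..b} (indicator {c..d} :: real \<Rightarrow> real) \<le> d - c" .
qed

context dig begin

lemma good_block:
  assumes y: "y \<in> {1/real s..<1}" and k: "1 \<le> k" and nB: "nk y k \<notin> Bset \<alpha> k"
    and t1: "real (nk y k) \<le> real s ^ k * t" and t2: "real s ^ k * t < real (nk y k) + 1"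
  shows "t \<in> Eset p s A \<alpha> \<longleftrightarrow> y \<in> Eset p s A \<alpha>"
proof -
  define n where "n = nk y k"
  define K where "K = real s ^ k"
  have K0: "0 < K" unfolding K_def using s_gt1 by simp
  have nr: "s ^ (k-1) \<le> n" "n < s ^ k" using nk_range[OF y k] unfolding n_def by auto
  have sk: "real s ^ k = real s * real s ^ (k-1)"
  proof -
    have "k = Suc (k-1)" using k by simp
    hence "real s ^ k = real s ^ Suc (k-1)" by simp
    thus ?thesis by simp
  qed
  have "K * (1 / real s) = real s ^ (k-1)" unfolding K_def sk using s_gt1 by simp
  also have "\<dots> \<le> real n"
  proof -
    have "real (s ^ (k-1)) \<le> real n" using nr(1) by (simp only: of_nat_le_iff)
    thus ?thesis by simp
  qed
  also have "\<dots> \<le> K * t" using t1 unfolding n_def K_def .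
  finally have "K * (1 / real s) \<le> K * t" .
  hence ta: "1 / real s \<le> t" using K0 by (simp only: mult_le_cancel_left_pos)
  have "K * t < real n + 1" using t2 unfolding n_def K_def .
  also have "real n + 1 \<le> K"
  proof -
    have "n + 1 \<le> s ^ k" using nr(2) by simp
    hence "real (n + 1) \<le> real (s ^ k)" by (simp only: of_nat_le_iff)
    thus ?thesis unfolding K_def by simp
  qed
  finally have "K * t < K * 1" by simp
  hence tb: "t < 1" using K0 by (simp only: mult_less_cancel_left_pos)
  have t: "t \<in> {1/real s..<1}" using ta tb by simp
  have ntk: "nk t k = n"
  proof -
    have "\<lfloor>real s ^ k * t\<rfloor> = int n" using t1 t2 unfolding n_def by (intro floor_unique) auto
    thus ?thesis unfolding nk_def by simp
  qed
  have Lt: "lo n \<le> lam p s A t \<and> lam p s A t \<le> hi n" using lam_bounds[OF t k] ntk by simp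
  have Ly: "lo n \<le> lam p s A y \<and> lam p s A y \<le> hi n" using lam_bounds[OF y k] n_def by simp
  have "1 \<le> s ^ (k-1)" using s2 by simp
  hence n1: "1 \<le> n" using nr(1) by linarith
  have ng: "0 < real n powr g" using n1 by simp
  have n1g: "0 < (real n + 1) powr g" by simp
  have "\<not> (\<alpha> * real n powr g < real (aseq p s A n) + 1 \<and> real (aseq p s A n) \<le> \<alpha> * (real n + 1) powr g)"
    using nB nr unfolding Bset_def n_def by auto
  then consider "real (aseq p s A n) + 1 \<le> \<alpha> * real n powr g" | "\<alpha> * (real n + 1) powr g < real (aseq p s A n)"
    by linarith
  thus ?thesis
  proof cases
    case 1
    hence "hi n \<le> \<alpha>" unfolding hi_def using ng by (simp add: divide_le_eq)
    thus ?thesis using Lt Ly t y unfolding Eset_def by auto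
  next
    case 2
    hence "\<alpha> < lo n" unfolding lo_def using n1g by (simp add: less_divide_eq)
    thus ?thesis using Lt Ly t y unfolding Eset_def by auto
  qed
qed

end



context dig begin

lemma main_riem:
  assumes al: "mInf p s A \<le> \<alpha>"
  shows "riemann_integrable (\<lambda>x. indicator (Eset p s A \<alpha>) x / x) (1 / real s) 1"
proof (rule riemann_from_modulus)
  show "1 / real s < 1" using s_gt1 by simp
  show "(\<lambda>x. indicator (Eset p s A \<alpha>) x / x) integrable_on {1 / real s..1}" by (rule f_integrable)
  fix e :: real assume e: "0 < e"
  define E where "E = Eset p s A \<alpha>"
  define S where "S = real s"
  have S1: "1 < S" unfolding S_def using s_gt1 .
  have "0 < 1 / real p" using p_gt1 by simp
  hence a0: "0 < \<alpha>" using mInf_lower al by linarith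
  have e2: "0 < e / (2 * S)" using e S1 by simp
  obtain k where k1: "1 \<le> k" and kB: "real (card (Bset \<alpha> k)) \<le> e / (2 * S) * real s ^ k"
    using card_Bset_small[OF a0 e2] by blast
  define K where "K = real s ^ k"
  define cB where "cB = real (card (Bset \<alpha> k))"
  have K0: "0 < K" unfolding K_def using s_gt1 by simp
  have cB0: "0 \<le> cB" unfolding cB_def by simp
  define \<delta> where "\<delta> = min (e / S^2) (e / (4 * S * (cB + K + 1)))"
  have den: "0 < 4 * S * (cB + K + 1)" using S1 cB0 K0 by simp
  have \<delta>0: "0 < \<delta>" unfolding \<delta>_def using e S1 den by simp
  have \<delta>1: "\<delta> \<le> e / S^2" and \<delta>2: "\<delta> \<le> e / (4 * S * (cB + K + 1))" unfolding \<delta>_def by auto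
  define I1 where "I1 n = (indicator {real n / K - \<delta> .. (real n + 1) / K + \<delta>} :: real \<Rightarrow> real)" for n :: nat
  define I2 where "I2 n = (indicator {real n / K - \<delta> .. real n / K + \<delta>} :: real \<Rightarrow> real)" for n :: nat
  define \<omega> where "\<omega> y = S * ((\<Sum>n\<in>Bset \<alpha> k. I1 n y) + (\<Sum>n\<in>{..s^k}. I2 n y))" for y
  define a where "a = 1 / real s"
  have le1: "real n / K - \<delta> \<le> (real n + 1) / K + \<delta>" for n :: nat
    using K0 \<delta>0 by (simp add: divide_le_eq_1 add_divide_distrib)
  have le2: "real n / K - \<delta> \<le> real n / K + \<delta>" for n :: nat using \<delta>0 by simp
  have i1: "I1 n integrable_on {a..1}" for n unfolding I1_def by (rule ind_int(1)[OF le1])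
  have i2: "I2 n integrable_on {a..1}" for n unfolding I2_def by (rule ind_int(1)[OF le2])
  have is1: "(\<lambda>y. \<Sum>n\<in>Bset \<alpha> k. I1 n y) integrable_on {a..1}"
    by (rule Henstock_Kurzweil_Integration.integrable_sum) (auto simp: finite_Bset i1)
  have is2: "(\<lambda>y. \<Sum>n\<in>{..s^k}. I2 n y) integrable_on {a..1}"
    by (rule Henstock_Kurzweil_Integration.integrable_sum) (auto simp: i2)
  have isum: "(\<lambda>y. (\<Sum>n\<in>Bset \<alpha> k. I1 n y) + (\<Sum>n\<in>{..s^k}. I2 n y)) integrable_on {a..1}"
    by (rule Henstock_Kurzweil_Integration.integrable_add[OF is1 is2])
  have wi: "\<omega> integrable_on {a..1}"
    unfolding \<omega>_def using integrable_on_cmult_left[OF isum, of S] by simp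
  have int1: "integral {a..1} (\<lambda>y. \<Sum>n\<in>Bset \<alpha> k. I1 n y) \<le> cB * (1 / K + 2 * \<delta>)"
  proof -
    have "integral {a..1} (\<lambda>y. \<Sum>n\<in>Bset \<alpha> k. I1 n y) = (\<Sum>n\<in>Bset \<alpha> k. integral {a..1} (I1 n))"
      by (rule Henstock_Kurzweil_Integration.integral_sum) (auto simp: finite_Bset i1)
    also have "\<dots> \<le> (\<Sum>n\<in>Bset \<alpha> k. 1 / K + 2 * \<delta>)"
    proof (rule sum_mono)
      fix n assume "n \<in> Bset \<alpha> k"
      have "integral {a..1} (I1 n) \<le> ((real n + 1) / K + \<delta>) - (real n / K - \<delta>)"
        unfolding I1_def by (rule ind_int(2)[OF le1])
      also have "\<dots> = 1 / K + 2 * \<delta>" by (simp add: add_divide_distrib)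
      finally show "integral {a..1} (I1 n) \<le> 1 / K + 2 * \<delta>" .
    qed
    also have "\<dots> = cB * (1 / K + 2 * \<delta>)" unfolding cB_def by simp
    finally show ?thesis .
  qed
  have int2: "integral {a..1} (\<lambda>y. \<Sum>n\<in>{..s^k}. I2 n y) \<le> (K + 1) * (2 * \<delta>)"
  proof -
    have "integral {a..1} (\<lambda>y. \<Sum>n\<in>{..s^k}. I2 n y) = (\<Sum>n\<in>{..s^k}. integral {a..1} (I2 n))"
      by (rule Henstock_Kurzweil_Integration.integral_sum) (auto simp: i2)
    also have "\<dots> \<le> (\<Sum>n\<in>{..s^k}. 2 * \<delta>)"
    proof (rule sum_mono)
      fix n :: nat
      have "integral {a..1} (I2 n) \<le> (real n / K + \<delta>) - (real n / K - \<delta>)"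
        unfolding I2_def by (rule ind_int(2)[OF le2])
      thus "integral {a..1} (I2 n) \<le> 2 * \<delta>" by simp
    qed
    also have "\<dots> = (K + 1) * (2 * \<delta>)" unfolding K_def by simp
    finally show ?thesis .
  qed
  have intw: "integral {a..1} \<omega> \<le> e"
  proof -
    have "integral {a..1} \<omega> = S * (integral {a..1} (\<lambda>y. \<Sum>n\<in>Bset \<alpha> k. I1 n y) + integral {a..1} (\<lambda>y. \<Sum>n\<in>{..s^k}. I2 n y))"
      unfolding \<omega>_def by (simp add: Henstock_Kurzweil_Integration.integral_add[OF is1 is2])
    also have "\<dots> \<le> S * (cB * (1 / K + 2 * \<delta>) + (K + 1) * (2 * \<delta>))"
      using int1 int2 S1 by (intro mult_left_mono add_mono) auto
    also have "\<dots> = S * cB / K + 2 * S * \<delta> * (cB + K + 1)" by (simp add: algebra_simps)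
    also have "S * cB / K \<le> e / 2"
    proof -
      have "cB \<le> e / (2 * S) * K" using kB unfolding cB_def K_def .
      hence "S * cB \<le> S * (e / (2 * S) * K)" using S1 by (intro mult_left_mono) auto
      also have "\<dots> = e / 2 * K" using S1 by simp
      finally show ?thesis using K0 by (simp add: divide_le_eq)
    qed
    also have "2 * S * \<delta> * (cB + K + 1) \<le> 2 * S * (e / (4 * S * (cB + K + 1))) * (cB + K + 1)"
      using \<delta>2 S1 cB0 K0 by (intro mult_right_mono mult_left_mono) auto
    also have "\<dots> = e / 2" using den S1 by (simp add: field_simps)
    finally show ?thesis by simp
  qed
  show "\<exists>\<delta>>0. \<exists>\<omega>. \<omega> integrable_on {1 / real s..1} \<and> integral {1 / real s..1} \<omega> \<le> e \<and>
        (\<forall>t\<in>{1 / real s..1}. \<forall>y\<in>{1 / real s..1}. \<bar>t - y\<bar> < \<delta> \<longrightarrow>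
           \<bar>indicator (Eset p s A \<alpha>) t / t - indicator (Eset p s A \<alpha>) y / y\<bar> \<le> \<omega> y + e)"
  proof (intro exI[of _ \<delta>] conjI exI[of _ \<omega>] \<delta>0 ballI impI)
    show "\<omega> integrable_on {1 / real s..1}" using wi unfolding a_def .
    show "integral {1 / real s..1} \<omega> \<le> e" using intw unfolding a_def .
    fix t y assume t: "t \<in> {1 / real s..1}" and y: "y \<in> {1 / real s..1}" and ty: "\<bar>t - y\<bar> < \<delta>"
    have S0: "0 < 1 / S" using S1 by simp
    have ta: "1 / S \<le> t" and yS: "1 / S \<le> y" and y1: "y \<le> 1" using t y unfolding S_def by auto
    have t0: "0 < t" and y0: "0 < y" using ta yS S0 by linarith+
    have w0: "0 \<le> \<omega> y" unfolding \<omega>_def I1_def I2_def using S1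
      by (intro mult_nonneg_nonneg add_nonneg_nonneg sum_nonneg) auto
    have yinv: "1 / y \<le> S" using yS y0 S1 by (simp add: divide_le_eq mult.commute)
    have tinv: "1 / t \<le> S" using ta t0 S1 by (simp add: divide_le_eq mult.commute)
    have lip: "\<bar>1 / t - 1 / y\<bar> \<le> e"
    proof -
      have "\<bar>1 / t - 1 / y\<bar> = \<bar>y - t\<bar> * ((1 / t) * (1 / y))" using t0 y0
        by (simp add: field_simps abs_mult)
      also have "\<dots> \<le> \<delta> * (S * S)"
        using ty t0 y0 tinv yinv S1 by (intro mult_mono) (auto simp: abs_minus_commute intro: mult_mono)
      also have "\<dots> \<le> e / S^2 * (S * S)" using \<delta>1 S1 by (intro mult_right_mono) auto
      also have "\<dots> = e" using S1 by (simp add: power2_eq_square)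
      finally show ?thesis .
    qed
    define it where "it = (indicator (Eset p s A \<alpha>) t :: real)"
    define iy where "iy = (indicator (Eset p s A \<alpha>) y :: real)"
    have it01: "0 \<le> it \<and> it \<le> 1" unfolding it_def by (simp add: indicator_def)
    have A1: "\<bar>it / t - it / y\<bar> \<le> e"
    proof -
      have "it / t - it / y = it * (1 / t - 1 / y)" by (simp add: right_diff_distrib)
      hence "\<bar>it / t - it / y\<bar> = \<bar>it\<bar> * \<bar>1 / t - 1 / y\<bar>" by (simp add: abs_mult)
      hence "\<bar>it / t - it / y\<bar> = it * \<bar>1 / t - 1 / y\<bar>" using it01 by simp
      also have "\<dots> \<le> 1 * \<bar>1 / t - 1 / y\<bar>" using it01 by (intro mult_right_mono) auto
      finally show ?thesis using lip by simp
    qed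
    show "\<bar>indicator (Eset p s A \<alpha>) t / t - indicator (Eset p s A \<alpha>) y / y\<bar> \<le> \<omega> y + e"
    proof (cases "(t \<in> Eset p s A \<alpha>) = (y \<in> Eset p s A \<alpha>)")
      case True
      hence "iy = it" unfolding it_def iy_def by (simp add: indicator_def)
      thus ?thesis using A1 w0 unfolding it_def[symmetric] iy_def[symmetric] by simp
    next
      case neq: False
      have big: "S \<le> \<omega> y"
      proof -
        have viaB: "S \<le> \<omega> y" if nB: "n \<in> Bset \<alpha> k" and yin: "y \<in> {real n / K - \<delta> .. (real n + 1) / K + \<delta>}" for n
        proof -
          have "1 \<le> (\<Sum>n\<in>Bset \<alpha> k. I1 n y)"
          proof -
            have "I1 n y \<le> (\<Sum>n\<in>Bset \<alpha> k. I1 n y)"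
              by (rule member_le_sum) (auto simp: nB finite_Bset I1_def)
            moreover have "I1 n y = 1" unfolding I1_def using yin by simp
            ultimately show ?thesis by simp
          qed
          moreover have "0 \<le> (\<Sum>n\<in>{..s^k}. I2 n y)" unfolding I2_def by (intro sum_nonneg) auto
          ultimately have "1 \<le> (\<Sum>n\<in>Bset \<alpha> k. I1 n y) + (\<Sum>n\<in>{..s^k}. I2 n y)" by simp
          thus ?thesis unfolding \<omega>_def using S1 by (metis mult.right_neutral mult_left_mono less_le_trans zero_less_one less_imp_le)
        qed
        have viaG: "S \<le> \<omega> y" if nG: "n \<le> s ^ k" and yin: "y \<in> {real n / K - \<delta> .. real n / K + \<delta>}" for n
        proof -
          have "1 \<le> (\<Sum>n\<in>{..s^k}. I2 n y)"
          proof -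
            have "I2 n y \<le> (\<Sum>n\<in>{..s^k}. I2 n y)"
              by (rule member_le_sum) (auto simp: nG I2_def)
            moreover have "I2 n y = 1" unfolding I2_def using yin by simp
            ultimately show ?thesis by simp
          qed
          moreover have "0 \<le> (\<Sum>n\<in>Bset \<alpha> k. I1 n y)" unfolding I1_def by (intro sum_nonneg) auto
          ultimately have "1 \<le> (\<Sum>n\<in>Bset \<alpha> k. I1 n y) + (\<Sum>n\<in>{..s^k}. I2 n y)" by simp
          thus ?thesis unfolding \<omega>_def using S1 by (metis mult.right_neutral mult_left_mono less_le_trans zero_less_one less_imp_le)
        qed
        show ?thesis
        proof (cases "y = 1")
          case True
          have e1: "real (s ^ k) / K = 1" unfolding K_def using K0 K_def by simp
          have "y \<in> {real (s ^ k) / K - \<delta> .. real (s ^ k) / K + \<delta>}" unfolding e1 using True \<delta>0 by simp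
          thus ?thesis by (rule viaG[OF le_refl])
        next
          case False
          hence yr: "y \<in> {1 / real s..<1}" using y by auto
          define n where "n = nk y k"
          have Ky0: "0 \<le> K * y" using K0 y0 by simp
          have nb: "real n \<le> K * y" "K * y < real n + 1"
            unfolding n_def nk_def K_def using nat_floor_bounds[OF Ky0[unfolded K_def]] by auto
          have nlt: "n < s ^ k" using nk_range[OF yr k1] unfolding n_def by simp
          have yl: "real n / K \<le> y" using nb K0 by (simp add: divide_le_eq mult.commute)
          have yu: "y < (real n + 1) / K" using nb K0 by (simp add: less_divide_eq mult.commute)
          show ?thesis
          proof (cases "n \<in> Bset \<alpha> k")
            case True thus ?thesis using viaB[OF True] yl yu \<delta>0 by simp
          next
            case nB: False
            show ?thesis
            proof (cases "y - real n / K \<le> \<delta>")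
              case True thus ?thesis using viaG[of n] nlt yl \<delta>0 by simp
            next
              case F1: False
              show ?thesis
              proof (cases "(real n + 1) / K - y \<le> \<delta>")
                case True
                have "y \<in> {real (Suc n) / K - \<delta> .. real (Suc n) / K + \<delta>}"
                  using yu True \<delta>0 by (simp add: add.commute)
                thus ?thesis using viaG[of "Suc n"] nlt by simp
              next
                case F2: False
                have tl: "real n / K < t" using F1 ty by linarith
                have tu: "t < (real n + 1) / K" using F2 ty by linarith
                have "real n \<le> real s ^ k * t" using tl K0 unfolding K_def by (simp add: divide_less_eq mult.commute)
                moreover have "real s ^ k * t < real n + 1" using tu K0 unfolding K_def by (simp add: less_divide_eq mult.commute)
                ultimately have "t \<in> Eset p s A \<alpha> \<longleftrightarrow> y \<in> Eset p s A \<alpha>"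
                  using good_block[OF yr k1, of \<alpha> t] nB unfolding n_def by simp
                thus ?thesis using neq by simp
              qed
            qed
          qed
        qed
      qed
      have iy01: "0 \<le> iy \<and> iy \<le> 1" unfolding iy_def by (simp add: indicator_def)
      have "\<bar>it / t - iy / y\<bar> \<le> \<bar>it / t - it / y\<bar> + \<bar>it / y - iy / y\<bar>" by linarith
      also have "\<bar>it / y - iy / y\<bar> = \<bar>it - iy\<bar> * (1 / y)"
      proof -
        have "it / y - iy / y = (it - iy) * (1 / y)" by (simp add: diff_divide_distrib)
        thus ?thesis using y0 by (simp add: abs_mult)
      qed
      also have "\<dots> \<le> 1 * S" using it01 iy01 yinv y0 by (intro mult_mono) auto
      finally have "\<bar>it / t - iy / y\<bar> \<le> e + S" using A1 by simp
      thus ?thesis using big unfolding it_def iy_def by simp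
    qed
  qed
qed

end


theorem mainTheorem14:
  fixes p s :: nat and A :: "nat set" and \<alpha> :: real
  assumes "3 \<le> p" and "2 \<le> s" and "s < p"
    and "A \<subseteq> {0..<p}" and "card A = s"
    and "\<alpha> \<in> {mInf p s A .. MSup p s A}"
  shows "riemann_integrable (\<lambda>x. indicator (Eset p s A \<alpha>) x / x) (1 / real s) 1"
proof -
  interpret dig p s A
    using assms(2,3,4,5) by unfold_locales auto
  show ?thesis using main_riem assms(6) by simp
qed

end
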